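(* Let $0<\gamma<2$, $\gamma\neq 4/3$, let $V\in C^3(\mathbb{R})$ with $V\ge 0$, and let $\chi\in C^3(\mathbb{R})$ with $\chi>0$. Consider the flow of the system $(\ast)$ on $\Sigma$ (see context), and set $Z^+=\{(x,y,z,\phi)\in\Sigma: z>0\}$ and $X^0=\{(x,y,z,\phi)\in\Sigma: x=0\}$. Then for every $p\in Z^+\setminus X^0$ the $\alpha$-limit set and $\omega$-limit set of $p$ satisfy $\alpha(p)\subset X^0$ and $\omega(p)\subset\partial Z^+$, where $\partial Z^+$ denotes the boundary of $Z^+$ (the points of $\overline{Z^+}$ with $z=0$).
   Context: The system $(\ast)$ is the autonomous system in $(x,y,z,\phi)\in\mathbb{R}^4$ (prime denotes $d/d\tau$): $x'=\tfrac12 x(2y^2+\gamma z^2)$, $y'=y^3+\tfrac12(\gamma z^2-2)y-\dfrac{x^2 V'(\phi)}{3\sqrt6}+\dfrac{(4-3\gamma)z^2}{2\sqrt6}\,\dfrac{\chi'(\phi)}{\chi(\phi)}$, $z'=\tfrac12 z\big(2y^2+(z^2-1)\gamma\big)-\dfrac{(4-3\gamma)yz}{2\sqrt6}\,\dfrac{\chi'(\phi)}{\chi(\phi)}$, $\phi'=\sqrt{2/3}\,y$, considered on the state space $\Sigma=\{(x,y,z,\phi)\in\mathbb{R}^4: x\ge0,\ z\ge0,\ y^2+z^2+\tfrac13x^2V(\phi)=1\}$. (It arises from a flat FRW cosmology with scalar field $\phi$, potential $V$, coupling $\chi$ and a barotropic fluid of density $\rho$, via $x=1/H$, $y=\dot\phi/(\sqrt6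 H)$, $z=\sqrt{\rho}/(\sqrt3 H)$, $d\tau=3H\,dt$.) For a point $p$, $\omega(p)$ (resp. $\alpha(p)$) is the set of limits of $\psi_{t_i}(p)$ along sequences $t_i\to+\infty$ (resp. $t_i\to-\infty$), $\psi$ being the flow. *)

theory Defs
  imports "HOL-Analysis.Analysis"
begin

type_synonym state = "real \<times> real \<times> real \<times> real"  (* (x, y, z, phi) *)

definition C3 :: "(real \<Rightarrow> real) \<Rightarrow> bool" where
  "C3 f \<longleftrightarrow> (\<exists>f1 f2 f3.
      (\<forall>t. (f has_real_derivative f1 t) (at t)) \<and>
      (\<forall>t. (f1 has_real_derivative f2 t) (at t)) \<and>
      (\<forall>t. (f2 has_real_derivative f3 t) (at t)) \<and>
      continuous_on UNIV f3)"

definition field :: "real \<Rightarrow> (real \<Rightarrow> real) \<Rightarrow> (real \<Rightarrow> real) \<Rightarrow> state \<Rightarrow> state" where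
  "field \<gamma> V chi s = (case s of (x, y, z, \<phi>) \<Rightarrow>
     ( x * (2 * y^2 + \<gamma> * z^2) / 2,
       y^3 + (\<gamma> * z^2 - 2) * y / 2 - x^2 * deriv V \<phi> / (3 * sqrt 6)
         + (4 - 3 * \<gamma>) * z^2 / (2 * sqrt 6) * (deriv chi \<phi> / chi \<phi>),
       z * (2 * y^2 + (z^2 - 1) * \<gamma>) / 2
         - (4 - 3 * \<gamma>) * y * z / (2 * sqrt 6) * (deriv chi \<phi> / chi \<phi>),
       sqrt (2/3) * y ))"

definition Sigma_set :: "(real \<Rightarrow> real) \<Rightarrow> state set" where
  "Sigma_set V = {(x, y, z, \<phi>). x \<ge> 0 \<and> z \<ge> 0 \<and> y^2 + z^2 + x^2 * V \<phi> / 3 = 1}"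

definition Zplus :: "(real \<Rightarrow> real) \<Rightarrow> state set" where
  "Zplus V = {s \<in> Sigma_set V. fst (snd (snd s)) > 0}"

definition X0 :: "(real \<Rightarrow> real) \<Rightarrow> state set" where
  "X0 V = {s \<in> Sigma_set V. fst s = 0}"

definition bdZplus :: "(real \<Rightarrow> real) \<Rightarrow> state set" where
  "bdZplus V = {s \<in> closure (Zplus V). fst (snd (snd s)) = 0}"

definition is_solution :: "real \<Rightarrow> (real \<Rightarrow> real) \<Rightarrow> (real \<Rightarrow> real) \<Rightarrow> (real \<Rightarrow> state) \<Rightarrow> bool" where
  "is_solution \<gamma> V chi u \<longleftrightarrow> (\<forall>t. (u has_vector_derivative field \<gamma> V chi (u t)) (at t))"

definition omega_limit :: "(real \<Rightarrow> state) \<Rightarrow> state set" where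
  "omega_limit u = {q. \<exists>t :: nat \<Rightarrow> real. filterlim t at_top sequentially \<and> (\<lambda>i. u (t i)) \<longlonglongrightarrow> q}"

definition alpha_limit :: "(real \<Rightarrow> state) \<Rightarrow> state set" where
  "alpha_limit u = {q. \<exists>t :: nat \<Rightarrow> real. filterlim t at_bot sequentially \<and> (\<lambda>i. u (t i)) \<longlonglongrightarrow> q}"

end

theory Submission imports Defs begin

lemma vd_fst: "(u has_vector_derivative w) F \<Longrightarrow> ((\<lambda>t. fst (u t)) has_vector_derivative fst w) F"
  unfolding has_vector_derivative_def
  by (drule has_derivative_fst) (simp add: fst_scaleR)

lemma vd_snd: "(u has_vector_derivative w) F \<Longrightarrow> ((\<lambda>t. snd (u t)) has_vector_derivative snd w) F"
  unfolding has_vector_derivative_def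
  by (drule has_derivative_snd) (simp add: snd_scaleR)

lemma lin_ode:
  fixes f a :: "real \<Rightarrow> real"
  assumes d: "\<And>t. (f has_real_derivative a t * f t) (at t)"
    and c: "continuous_on UNIV a"
  shows "\<exists>A. f t = f 0 * exp A"
proof -
  define T where "T = \<bar>t\<bar> + 1"
  define S where "S = {-T..T}"
  define B where "B = (\<lambda>s. integral {-T..s} a)"
  have cS: "continuous_on {-T..T} a" using c continuous_on_subset by blast
  have dB: "(B has_real_derivative a s) (at s within S)" if "s \<in> S" for s
    unfolding B_def S_def using integral_has_real_derivative[OF cS] that S_def by blast
  have "((\<lambda>s. f s * exp (- B s)) has_field_derivative 0) (at s within S)" if "s \<in> S" for s
  proof -
    have "((\<lambda>s. f s * exp (- B s)) has_field_derivative
       (a s * f s) * exp (- B s) + f s * (exp (- B s) * (- a s))) (at s within S)"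
      using has_field_derivative_at_within[OF d] dB[OF that]
      by (auto intro!: derivative_eq_intros)
    then show ?thesis by (simp add: algebra_simps)
  qed
  then obtain k where k: "\<forall>s\<in>S. f s * exp (- B s) = k"
    using has_field_derivative_zero_constant[of S "\<lambda>s. f s * exp (- B s)"] S_def by auto
  have t: "t \<in> S" and z: "0 \<in> S" unfolding S_def T_def by auto
  have "f t * exp (- B t) = f 0 * exp (- B 0)" using k t z by auto
  then have "f t = f 0 * exp (B t - B 0)"
    by (simp add: exp_diff exp_minus field_simps)
  then show ?thesis by blast
qed

lemma lin_ode_pos:
  fixes f a :: "real \<Rightarrow> real"
  assumes "\<And>t. (f has_real_derivative a t * f t) (at t)" "continuous_on UNIV a" "f 0 > 0"
  shows "f t > 0"
  using lin_ode[OF assms(1,2), of t] assms(3) by auto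

lemma lin_ode_zero:
  fixes f a :: "real \<Rightarrow> real"
  assumes "\<And>t. (f has_real_derivative a t * f t) (at t)" "continuous_on UNIV a" "f 0 = 0"
  shows "f t = 0"
  using lin_ode[OF assms(1,2), of t] assms(3) by auto


lemma field_simps4:
  "fst (field \<gamma> V chi (x,y,z,\<phi>)) = x * (2 * y^2 + \<gamma> * z^2) / 2"
  "fst (snd (field \<gamma> V chi (x,y,z,\<phi>))) = y^3 + (\<gamma> * z^2 - 2) * y / 2 - x^2 * deriv V \<phi> / (3 * sqrt 6)
         + (4 - 3 * \<gamma>) * z^2 / (2 * sqrt 6) * (deriv chi \<phi> / chi \<phi>)"
  "fst (snd (snd (field \<gamma> V chi (x,y,z,\<phi>)))) = z * (2 * y^2 + (z^2 - 1) * \<gamma>) / 2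
         - (4 - 3 * \<gamma>) * y * z / (2 * sqrt 6) * (deriv chi \<phi> / chi \<phi>)"
  "snd (snd (snd (field \<gamma> V chi (x,y,z,\<phi>)))) = sqrt (2/3) * y"
  by (simp_all add: field_def)

lemma sq23: "sqrt (2/3) = 2 / sqrt 6"
proof -
  have a: "sqrt 6 = sqrt 2 * sqrt 3" by (simp add: real_sqrt_mult[symmetric])
  have b: "sqrt 2 * sqrt 2 = 2" by simp
  show ?thesis unfolding a real_sqrt_divide by (simp add: field_simps b)
qed

theorem lemma1:
  fixes \<gamma> :: real and V chi :: "real \<Rightarrow> real" and p :: state and u :: "real \<Rightarrow> state"
  assumes "0 < \<gamma>" and "\<gamma> < 2" and "\<gamma> \<noteq> 4/3"
    and "C3 V" and "\<And>t. V t \<ge> 0"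
    and "C3 chi" and "\<And>t. chi t > 0"
    and "p \<in> Zplus V - X0 V"
    and "is_solution \<gamma> V chi u" and "u 0 = p"
  shows "alpha_limit u \<subseteq> X0 V \<and> omega_limit u \<subseteq> bdZplus V"
proof -
  obtain V1 V2 V3 where V1: "\<And>t. (V has_real_derivative V1 t) (at t)"
     and V2: "\<And>t. (V1 has_real_derivative V2 t) (at t)"
    using assms(4) unfolding C3_def by blast
  obtain c1 c2 c3 where c1: "\<And>t. (chi has_real_derivative c1 t) (at t)"
     and c2: "\<And>t. (c1 has_real_derivative c2 t) (at t)"
    using assms(6) unfolding C3_def by blast
  have dV: "deriv V = V1" using V1 DERIV_imp_deriv by blast
  have dc: "deriv chi = c1" using c1 DERIV_imp_deriv by blast
  have cc1: "isCont c1 s" for s using c2 DERIV_isCont by blast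
  have cchi: "isCont chi s" for s using c1 DERIV_isCont by blast
  have cV: "isCont V s" for s using V1 DERIV_isCont by blast
  define X where "X = (\<lambda>t. fst (u t))"
  define Y where "Y = (\<lambda>t. fst (snd (u t)))"
  define Z where "Z = (\<lambda>t. fst (snd (snd (u t))))"
  define P where "P = (\<lambda>t. snd (snd (snd (u t))))"
  have ueq: "u t = (X t, Y t, Z t, P t)" for t unfolding X_def Y_def Z_def P_def by simp
  have du: "(u has_vector_derivative field \<gamma> V chi (u t)) (at t)" for t
    using assms(9) unfolding is_solution_def by blast
  define k where "k = (4 - 3 * \<gamma>) / (2 * sqrt 6)"
  have dX: "(X has_real_derivative X t * (2 * Y t^2 + \<gamma> * Z t^2) / 2) (at t)" for t
    using vd_fst[OF du[of t]] unfolding has_real_derivative_iff_has_vector_derivative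
    by (simp add: ueq field_simps4 X_def[symmetric])
  have dY: "(Y has_real_derivative Y t^3 + (\<gamma> * Z t^2 - 2) * Y t / 2 - X t^2 * V1 (P t) / (3 * sqrt 6)
         + k * Z t^2 * (c1 (P t) / chi (P t))) (at t)" for t
    using vd_fst[OF vd_snd[OF du[of t]]] unfolding has_real_derivative_iff_has_vector_derivative
    by (simp add: ueq field_simps4 Y_def[symmetric] dV dc k_def)
  have dZ: "(Z has_real_derivative Z t * (2 * Y t^2 + (Z t^2 - 1) * \<gamma>) / 2
         - k * Y t * Z t * (c1 (P t) / chi (P t))) (at t)" for t
    using vd_fst[OF vd_snd[OF vd_snd[OF du[of t]]]] unfolding has_real_derivative_iff_has_vector_derivative
    by (simp add: ueq field_simps4 Z_def[symmetric] dV dc k_def)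
  have dP: "(P has_real_derivative sqrt (2/3) * Y t) (at t)" for t
    using vd_snd[OF vd_snd[OF vd_snd[OF du[of t]]]] unfolding has_real_derivative_iff_has_vector_derivative
    by (simp add: ueq field_simps4 P_def[symmetric])
  have cX: "isCont X t" and cY: "isCont Y t" and cZ: "isCont Z t" and cP: "isCont P t" for t
    using dX dY dZ dP DERIV_isCont by blast+
  have cchiP: "isCont (\<lambda>t. chi (P t)) t" for t using cP cchi by (rule isCont_o2)
  have cc1P: "isCont (\<lambda>t. c1 (P t)) t" for t using cP cc1 by (rule isCont_o2)
  have chipos: "chi (P t) \<noteq> 0" for t using assms(7)[of "P t"] by simp
  have p: "X 0 > 0" "Z 0 > 0" "X 0 \<ge> 0" "Y 0^2 + Z 0^2 + X 0^2 * V (P 0) / 3 = 1"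
    using assms(8) assms(10) ueq[of 0]
    by (auto simp: Zplus_def X0_def Sigma_set_def)
  have aX: "(X has_real_derivative (\<lambda>t. (2 * Y t^2 + \<gamma> * Z t^2) / 2) t * X t) (at t)" for t
      using dX[of t] by (simp add: algebra_simps)
  have cX': "continuous_on UNIV (\<lambda>t. (2 * Y t^2 + \<gamma> * Z t^2) / 2)"
      by (intro continuous_at_imp_continuous_on ballI continuous_intros cY cZ) auto
  have Xpos: "X t > 0" for t by (rule lin_ode_pos[OF aX cX' p(1)])
  have aZ: "(Z has_real_derivative (\<lambda>t. (2 * Y t^2 + (Z t^2 - 1) * \<gamma>) / 2
         - k * Y t * (c1 (P t) / chi (P t))) t * Z t) (at t)" for t
      using dZ[of t] by (simp add: algebra_simps)
  have cZ': "continuous_on UNIV (\<lambda>t. (2 * Y t^2 + (Z t^2 - 1) * \<gamma>) / 2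
         - k * Y t * (c1 (P t) / chi (P t)))"
      by (intro continuous_at_imp_continuous_on ballI continuous_intros cY cZ cc1P cchiP chipos) auto
  have Zpos: "Z t > 0" for t by (rule lin_ode_pos[OF aZ cZ' p(2)])
  have dVP: "((\<lambda>t. V (P t)) has_real_derivative V1 (P t) * (sqrt (2/3) * Y t)) (at t)" for t
    using DERIV_chain2[OF V1 dP] .
  have dchiP: "((\<lambda>t. chi (P t)) has_real_derivative c1 (P t) * (sqrt (2/3) * Y t)) (at t)" for t
    using DERIV_chain2[OF c1 dP] .
  define C where "C = (\<lambda>t. Y t^2 + Z t^2 + X t^2 * V (P t) / 3 - 1)"
  have aC: "(C has_real_derivative (\<lambda>t. 2 * Y t^2 + \<gamma> * Z t^2) t * C t) (at t)" for t
  proof -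
    have D: "(C has_real_derivative 
         2 * Y t * (Y t^3 + (\<gamma> * Z t^2 - 2) * Y t / 2 - X t^2 * V1 (P t) / (3 * sqrt 6)
         + k * Z t^2 * (c1 (P t) / chi (P t)))
       + 2 * Z t * (Z t * (2 * Y t^2 + (Z t^2 - 1) * \<gamma>) / 2
         - k * Y t * Z t * (c1 (P t) / chi (P t)))
       + (2 * X t * (X t * (2 * Y t^2 + \<gamma> * Z t^2) / 2) * V (P t)) / 3
       + X t^2 * (V1 (P t) * (sqrt (2/3) * Y t)) / 3) (at t)"
      unfolding C_def using dX[of t] dY[of t] dZ[of t] dVP[of t]
      by (auto intro!: derivative_eq_intros simp: field_simps)
    have s: "X t^2 * (V1 (P t) * (sqrt (2/3) * Y t)) / 3 = 2 * Y t * (X t^2 * V1 (P t) / (3 * sqrt 6))"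
      by (simp add: sq23 mult_ac)
    have E: "2 * Y t * (Y t^3 + (\<gamma> * Z t^2 - 2) * Y t / 2 - X t^2 * V1 (P t) / (3 * sqrt 6)
         + k * Z t^2 * (c1 (P t) / chi (P t)))
       + 2 * Z t * (Z t * (2 * Y t^2 + (Z t^2 - 1) * \<gamma>) / 2
         - k * Y t * Z t * (c1 (P t) / chi (P t)))
       + (2 * X t * (X t * (2 * Y t^2 + \<gamma> * Z t^2) / 2) * V (P t)) / 3
       + X t^2 * (V1 (P t) * (sqrt (2/3) * Y t)) / 3 = (\<lambda>t. 2 * Y t^2 + \<gamma> * Z t^2) t * C t"
      unfolding s C_def by (simp add: field_simps power2_eq_square power3_eq_cube)
    show ?thesis using D unfolding E .
  qed
  have cC': "continuous_on UNIV (\<lambda>t. 2 * Y t^2 + \<gamma> * Z t^2)"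
      by (intro continuous_at_imp_continuous_on ballI continuous_intros cY cZ)
  have C0: "C 0 = 0" using p by (simp add: C_def)
  have Czero: "C t = 0" for t by (rule lin_ode_zero[OF aC cC' C0])
  define cc where "cc = (4 - 3 * \<gamma>) / 4"
  define L where "L = (\<lambda>t. ln (Z t) - ln (X t) + cc * ln (chi (P t)))"
  have dL: "((\<lambda>t. L t + \<gamma> * t / 2) has_real_derivative 0) (at t)" for t
  proof -
    have D: "((\<lambda>t. L t + \<gamma> * t / 2) has_real_derivative
       (Z t * (2 * Y t^2 + (Z t^2 - 1) * \<gamma>) / 2
         - k * Y t * Z t * (c1 (P t) / chi (P t))) / Z t
       - (X t * (2 * Y t^2 + \<gamma> * Z t^2) / 2) / X t
       + cc * ((c1 (P t) * (sqrt (2/3) * Y t)) / chi (P t)) + \<gamma> / 2) (at t)"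
      unfolding L_def using dX[of t] dZ[of t] dchiP[of t] Xpos[of t] Zpos[of t] assms(7)[of "P t"]
      by (auto intro!: derivative_eq_intros simp: field_simps)
    have kk: "cc * sqrt (2/3) = k" unfolding cc_def k_def sq23 by (simp add: field_simps)
    have E: "(Z t * (2 * Y t^2 + (Z t^2 - 1) * \<gamma>) / 2
         - k * Y t * Z t * (c1 (P t) / chi (P t))) / Z t
       - (X t * (2 * Y t^2 + \<gamma> * Z t^2) / 2) / X t
       + cc * ((c1 (P t) * (sqrt (2/3) * Y t)) / chi (P t)) + \<gamma> / 2 = 0"
      using Xpos[of t] Zpos[of t] assms(7)[of "P t"] unfolding k_def cc_def sq23
      by (simp add: field_simps)
    show ?thesis using D unfolding E .
  qed
  have Lt: "L t = L 0 - \<gamma> * t / 2" for t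
    using DERIV_isconst_all[OF allI[OF dL], of t 0] by simp
  have inS: "u t \<in> Sigma_set V" for t
    using Xpos[of t] Zpos[of t] Czero[of t] unfolding ueq Sigma_set_def C_def by auto
  have inZ: "u t \<in> Zplus V" for t
    using inS[of t] Zpos[of t] unfolding Zplus_def by (simp add: ueq)
  have closedS: "closed (Sigma_set V)"
  proof -
    have cVs: "continuous_on UNIV (\<lambda>s::state. V (snd (snd (snd s))))"
      by (intro continuous_at_imp_continuous_on ballI isCont_o2[OF _ cV] continuous_intros)
    have "Sigma_set V = {s. 0 \<le> fst s} \<inter> {s. 0 \<le> fst (snd (snd s))} \<inter>
       {s. fst (snd s)^2 + fst (snd (snd s))^2 + fst s^2 * V (snd (snd (snd s))) / 3 = 1}"
      unfolding Sigma_set_def by auto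
    also have "closed \<dots>"
      by (intro closed_Int closed_Collect_le closed_Collect_eq continuous_intros
            continuous_on_compose2[OF continuous_on_id cVs] cVs) auto
    finally show ?thesis .
  qed
  have comps: "(\<lambda>i. X (tt i)) \<longlonglongrightarrow> xq \<and> (\<lambda>i. Z (tt i)) \<longlonglongrightarrow> zq \<and> (\<lambda>i. P (tt i)) \<longlonglongrightarrow> \<phi>q"
    if "(\<lambda>i. u (tt i)) \<longlonglongrightarrow> (xq, yq, zq, \<phi>q)" for tt xq yq zq \<phi>q
  proof -
    have a: "(\<lambda>i. fst (u (tt i))) \<longlonglongrightarrow> xq" using tendsto_fst[OF that] by simp
    have b: "(\<lambda>i. snd (u (tt i))) \<longlonglongrightarrow> (yq, zq, \<phi>q)" using tendsto_snd[OF that] by simp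
    have c: "(\<lambda>i. fst (snd (snd (u (tt i))))) \<longlonglongrightarrow> zq" using tendsto_fst[OF tendsto_snd[OF b]] by simp
    have d: "(\<lambda>i. snd (snd (snd (u (tt i))))) \<longlonglongrightarrow> \<phi>q" using tendsto_snd[OF tendsto_snd[OF b]] by simp
    show ?thesis using a c d unfolding X_def Z_def P_def by simp
  qed
  have omega: "omega_limit u \<subseteq> bdZplus V"
  proof
    fix q assume "q \<in> omega_limit u"
    then obtain tt where tt: "filterlim tt at_top sequentially" and lim: "(\<lambda>i. u (tt i)) \<longlonglongrightarrow> q"
      unfolding omega_limit_def by blast
    obtain xq yq zq \<phi>q where qq: "q = (xq, yq, zq, \<phi>q)" by (cases q) auto
    from comps[OF lim[unfolded qq]] have lX: "(\<lambda>i. X (tt i)) \<longlonglongrightarrow> xq"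
      and lZ: "(\<lambda>i. Z (tt i)) \<longlonglongrightarrow> zq" and lP: "(\<lambda>i. P (tt i)) \<longlonglongrightarrow> \<phi>q" by auto
    have qcl: "q \<in> closure (Zplus V)"
      unfolding closure_sequential by (intro exI[of _ "\<lambda>i. u (tt i)"]) (use inZ lim in auto)
    have "zq = 0"
    proof (rule ccontr)
      assume nz: "zq \<noteq> 0"
      have "0 \<le> zq" using Zpos by (intro LIMSEQ_le_const[OF lZ]) (auto intro: less_imp_le)
      with nz have zq: "zq > 0" by simp
      have lchi: "(\<lambda>i. chi (P (tt i))) \<longlonglongrightarrow> chi \<phi>q" using isCont_tendsto_compose[OF cchi lP] .
      have chq: "chi \<phi>q \<noteq> 0" using assms(7)[of \<phi>q] by simp
      define w where "w = ln zq + cc * ln (chi \<phi>q) - xq"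
      have lw: "(\<lambda>i. ln (Z (tt i)) + cc * ln (chi (P (tt i))) - X (tt i)) \<longlonglongrightarrow> w"
        unfolding w_def using zq chq by (intro tendsto_intros lZ lchi lX) auto
      have e1: "eventually (\<lambda>i. w - 1 < ln (Z (tt i)) + cc * ln (chi (P (tt i))) - X (tt i)) sequentially"
        using order_tendstoD(1)[OF lw, of "w - 1"] by simp
      have e2: "eventually (\<lambda>i. 2 * (L 0 - w + 2) / \<gamma> \<le> tt i) sequentially"
        using tt unfolding filterlim_at_top by blast
      have "eventually (\<lambda>i. False) sequentially"
        using e1 e2
      proof eventually_elim
        case (elim i)
        have "ln (X (tt i)) \<le> X (tt i)" using ln_le_minus_one[OF Xpos[of "tt i"]] by simp
        then have "L (tt i) \<ge> ln (Z (tt i)) + cc * ln (chi (P (tt i))) - X (tt i)"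
          unfolding L_def by simp
        moreover have "L (tt i) \<le> w - 2"
        proof -
          have "\<gamma> * tt i \<ge> \<gamma> * (2 * (L 0 - w + 2) / \<gamma>)"
            using elim(2) assms(1) by (intro mult_left_mono) auto
          then have "\<gamma> * tt i \<ge> 2 * (L 0 - w + 2)" using assms(1) by simp
          then show ?thesis using Lt[of "tt i"] by (smt (verit) field_sum_of_halves)
        qed
        ultimately show False using elim(1) by simp
      qed
      then show False by simp
    qed
    then show "q \<in> bdZplus V" using qcl unfolding bdZplus_def qq by simp
  qed
  have alpha: "alpha_limit u \<subseteq> X0 V"
  proof
    fix q assume "q \<in> alpha_limit u"
    then obtain tt where tt: "filterlim tt at_bot sequentially" and lim: "(\<lambda>i. u (tt i)) \<longlonglongrightarrow> q"
      unfolding alpha_limit_def by blast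
    obtain xq yq zq \<phi>q where qq: "q = (xq, yq, zq, \<phi>q)" by (cases q) auto
    from comps[OF lim[unfolded qq]] have lX: "(\<lambda>i. X (tt i)) \<longlonglongrightarrow> xq"
      and lZ: "(\<lambda>i. Z (tt i)) \<longlonglongrightarrow> zq" and lP: "(\<lambda>i. P (tt i)) \<longlonglongrightarrow> \<phi>q" by auto
    have qS: "q \<in> Sigma_set V"
      by (rule closed_sequentially[OF closedS _ lim]) (use inS in auto)
    have "xq = 0"
    proof (rule ccontr)
      assume nz: "xq \<noteq> 0"
      have "0 \<le> xq" using qS unfolding qq Sigma_set_def by simp
      with nz have xq: "xq > 0" by simp
      have lchi: "(\<lambda>i. chi (P (tt i))) \<longlonglongrightarrow> chi \<phi>q" using isCont_tendsto_compose[OF cchi lP] .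
      have chq: "chi \<phi>q \<noteq> 0" using assms(7)[of \<phi>q] by simp
      define v where "v = zq - ln xq + cc * ln (chi \<phi>q)"
      have lv: "(\<lambda>i. Z (tt i) - ln (X (tt i)) + cc * ln (chi (P (tt i)))) \<longlonglongrightarrow> v"
        unfolding v_def using xq chq by (intro tendsto_intros lZ lchi lX) auto
      have e1: "eventually (\<lambda>i. Z (tt i) - ln (X (tt i)) + cc * ln (chi (P (tt i))) < v + 1) sequentially"
        using order_tendstoD(2)[OF lv, of "v + 1"] by simp
      have e2: "eventually (\<lambda>i. tt i \<le> 2 * (L 0 - v - 2) / \<gamma>) sequentially"
        using tt unfolding filterlim_at_bot by blast
      have "eventually (\<lambda>i. False) sequentially"
        using e1 e2
      proof eventually_elim
        case (elim i)
        have "ln (Z (tt i)) \<le> Z (tt i)" using ln_le_minus_one[OF Zpos[of "tt i"]] by simp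
        then have "L (tt i) \<le> Z (tt i) - ln (X (tt i)) + cc * ln (chi (P (tt i)))"
          unfolding L_def by simp
        moreover have "L (tt i) \<ge> v + 2"
        proof -
          have "\<gamma> * tt i \<le> \<gamma> * (2 * (L 0 - v - 2) / \<gamma>)"
            using elim(2) assms(1) by (intro mult_left_mono) auto
          then have "\<gamma> * tt i \<le> 2 * (L 0 - v - 2)" using assms(1) by simp
          then show ?thesis using Lt[of "tt i"] by (smt (verit) field_sum_of_halves)
        qed
        ultimately show False using elim(1) by simp
      qed
      then show False by simp
    qed
    then show "q \<in> X0 V" using qS unfolding X0_def qq by simp
  qed
  show ?thesis using alpha omega by blast
qed

end
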